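(* Let $k$ be a field, $d\ge 1$ an integer, and let $(\mathcal{C},\Sigma^d,\Theta)$ be a $k$-linear, Hom-finite, Krull–Schmidt $(d+2)$-angulated category. Let $X$ be an indecomposable object of $\mathcal{C}$. Then the sets $S(X)$ and $T(X)$ (defined in the context) are both non-empty.
   Context: A $(d+2)$-angulated category (in the sense of Geiss–Keller–Oppermann) is a triple $(\mathcal{C},\Sigma^d,\Theta)$ where $\mathcal{C}$ is an additive category, $\Sigma^d$ is an automorphism of $\mathcal{C}$, and $\Theta$ is a class of sequences $A_0\xrightarrow{\alpha_0}A_1\xrightarrow{\alpha_1}\cdots\xrightarrow{\alpha_d}A_{d+1}\xrightarrow{\alpha_{d+1}}\Sigma^dA_0$ (called $(d+2)$-angles) satisfying the axioms (N1)–(N4): $\Theta$ is closed under isomorphisms, direct sums and direct summands, contains the trivial sequences $A\xrightarrow{1}A\to0\to\cdots\to0\to\Sigma^dA$, and every morphism $A_0\to A_1$ extends to a $(d+2)$-angle; a sequence is in $\Theta$ iff its left rotation $A_1\to\cdots\to A_{d+1}\to\Sigma^dA_0\xrightarrow{(-1)^d\Sigma^d\alpha_0}\Sigma^dA_1$ is; every commutative square between the first two terms of two $(d+2)$-angles extends to a morphism of $(d+2)$-angles; and this extension can be chosen so that the mapping cone is a $(d+2)$-angle. A $(d+2)$-angle is split if $\alpha_{d+1}=0$ (equivalently $\alpha_0$ is a section, equivalently $\alpha_d$ is a retraction). $\mathrm{rad}_{\mathcal{C}}$ denotes the Jacobson radical of $\mathcal{C}$. For an indecomposable $X$, $S(X)$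 is the set of non-split $(d+2)$-angles of the form $A\xrightarrow{\alpha_0}A_1\xrightarrow{\alpha_1}\cdots\xrightarrow{\alpha_{d-1}}A_d\xrightarrow{\alpha_d}X\xrightarrow{\alpha_{d+1}}\Sigma^dA$ with $A$ indecomposable and, when $d\ge2$, $\alpha_1,\dots,\alpha_{d-1}\in\mathrm{rad}_{\mathcal{C}}$. Dually, $T(X)$ is the set of non-split $(d+2)$-angles of the form $X\xrightarrow{\alpha_0}A_1\xrightarrow{\alpha_1}\cdots\xrightarrow{\alpha_{d-1}}A_d\xrightarrow{\alpha_d}A\xrightarrow{\alpha_{d+1}}\Sigma^dX$ with $A$ indecomposable and, when $d\ge2$, $\alpha_1,\dots,\alpha_{d-1}\in\mathrm{rad}_{\mathcal{C}}$. *)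

theory Defs
  imports Main
begin

text \<open>A category with object set Ob, arrow set Ar, source/target maps,
 composition cmp g f (meaning g after f), identities, zero morphisms,
 addition and scalar multiplication by the field 'k on each Hom-set.\<close>

record ('o,'m,'k) kcat =
  Ob  :: "'o set"
  Ar  :: "'m set"
  src :: "'m \<Rightarrow> 'o"
  tgt :: "'m \<Rightarrow> 'o"
  cmp :: "'m \<Rightarrow> 'm \<Rightarrow> 'm"
  ide :: "'o \<Rightarrow> 'm"
  zro :: "'o \<Rightarrow> 'o \<Rightarrow> 'm"
  pls :: "'m \<Rightarrow> 'm \<Rightarrow> 'm"
  scl :: "'k \<Rightarrow> 'm \<Rightarrow> 'm"

definition Hom :: "('o,'m,'k) kcat \<Rightarrow> 'o \<Rightarrow> 'o \<Rightarrow> 'm set" where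
  "Hom C A B = {f \<in> Ar C. src C f = A \<and> tgt C f = B}"

definition neg :: "('o,'m,'k::field) kcat \<Rightarrow> 'm \<Rightarrow> 'm" where
  "neg C f = scl C (-1) f"

definition category :: "('o,'m,'k) kcat \<Rightarrow> bool" where
  "category C \<longleftrightarrow>
     (\<forall>f\<in>Ar C. src C f \<in> Ob C \<and> tgt C f \<in> Ob C) \<and>
     (\<forall>A\<in>Ob C. ide C A \<in> Hom C A A) \<and>
     (\<forall>A B D f g. f \<in> Hom C A B \<longrightarrow> g \<in> Hom C B D \<longrightarrow> cmp C g f \<in> Hom C A D) \<and>
     (\<forall>A B D E f g h. f \<in> Hom C A B \<longrightarrow> g \<in> Hom C B D \<longrightarrow> h \<in> Hom C D E \<longrightarrow>
        cmp C h (cmp C g f) = cmp C (cmp C h g) f) \<and>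
     (\<forall>A B f. f \<in> Hom C A B \<longrightarrow> cmp C f (ide C A) = f \<and> cmp C (ide C B) f = f)"

definition klinear :: "('o,'m,'k::field) kcat \<Rightarrow> bool" where
  "klinear C \<longleftrightarrow> category C \<and>
     (\<forall>A\<in>Ob C. \<forall>B\<in>Ob C. zro C A B \<in> Hom C A B) \<and>
     (\<forall>A B f g. f \<in> Hom C A B \<longrightarrow> g \<in> Hom C A B \<longrightarrow> pls C f g \<in> Hom C A B) \<and>
     (\<forall>A B f c. f \<in> Hom C A B \<longrightarrow> scl C c f \<in> Hom C A B) \<and>
     (\<forall>A B f g h. f \<in> Hom C A B \<longrightarrow> g \<in> Hom C A B \<longrightarrow> h \<in> Hom C A B \<longrightarrow>
        pls C (pls C f g) h = pls C f (pls C g h)) \<and>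
     (\<forall>A B f g. f \<in> Hom C A B \<longrightarrow> g \<in> Hom C A B \<longrightarrow> pls C f g = pls C g f) \<and>
     (\<forall>A B f. f \<in> Hom C A B \<longrightarrow> pls C f (zro C A B) = f) \<and>
     (\<forall>A B f. f \<in> Hom C A B \<longrightarrow> pls C f (neg C f) = zro C A B) \<and>
     (\<forall>A B f g a. f \<in> Hom C A B \<longrightarrow> g \<in> Hom C A B \<longrightarrow>
        scl C a (pls C f g) = pls C (scl C a f) (scl C a g)) \<and>
     (\<forall>A B f a b. f \<in> Hom C A B \<longrightarrow> scl C (a + b) f = pls C (scl C a f) (scl C b f)) \<and>
     (\<forall>A B f a b. f \<in> Hom C A B \<longrightarrow> scl C (a * b) f = scl C a (scl C b f)) \<and>
     (\<forall>A B f. f \<in> Hom C A B \<longrightarrow> scl C 1 f = f) \<and>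
     (\<forall>A B D f f' g. f \<in> Hom C A B \<longrightarrow> f' \<in> Hom C A B \<longrightarrow> g \<in> Hom C B D \<longrightarrow>
        cmp C g (pls C f f') = pls C (cmp C g f) (cmp C g f')) \<and>
     (\<forall>A B D f g g'. f \<in> Hom C A B \<longrightarrow> g \<in> Hom C B D \<longrightarrow> g' \<in> Hom C B D \<longrightarrow>
        cmp C (pls C g g') f = pls C (cmp C g f) (cmp C g' f)) \<and>
     (\<forall>A B D f g a. f \<in> Hom C A B \<longrightarrow> g \<in> Hom C B D \<longrightarrow>
        cmp C (scl C a g) f = scl C a (cmp C g f) \<and> cmp C g (scl C a f) = scl C a (cmp C g f))"

definition iso_arr :: "('o,'m,'k) kcat \<Rightarrow> 'm \<Rightarrow> bool" where
  "iso_arr C f \<longleftrightarrow> f \<in> Ar C \<and>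
     (\<exists>g\<in>Hom C (tgt C f) (src C f).
        cmp C g f = ide C (src C f) \<and> cmp C f g = ide C (tgt C f))"

definition zero_obj :: "('o,'m,'k) kcat \<Rightarrow> 'o \<Rightarrow> bool" where
  "zero_obj C Z \<longleftrightarrow> Z \<in> Ob C \<and>
     (\<forall>A\<in>Ob C. \<exists>!f. f \<in> Hom C Z A) \<and> (\<forall>A\<in>Ob C. \<exists>!f. f \<in> Hom C A Z)"

definition biprod :: "('o,'m,'k) kcat \<Rightarrow> 'o \<Rightarrow> 'o \<Rightarrow> 'o \<Rightarrow> 'm \<Rightarrow> 'm \<Rightarrow> 'm \<Rightarrow> 'm \<Rightarrow> bool" where
  "biprod C X A B i1 i2 p1 p2 \<longleftrightarrow>
     X \<in> Ob C \<and> A \<in> Ob C \<and> B \<in> Ob C \<and>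
     i1 \<in> Hom C A X \<and> i2 \<in> Hom C B X \<and> p1 \<in> Hom C X A \<and> p2 \<in> Hom C X B \<and>
     cmp C p1 i1 = ide C A \<and> cmp C p2 i2 = ide C B \<and>
     cmp C p2 i1 = zro C A B \<and> cmp C p1 i2 = zro C B A \<and>
     pls C (cmp C i1 p1) (cmp C i2 p2) = ide C X"

definition additive_klinear :: "('o,'m,'k::field) kcat \<Rightarrow> bool" where
  "additive_klinear C \<longleftrightarrow> klinear C \<and> (\<exists>Z. zero_obj C Z) \<and>
     (\<forall>A\<in>Ob C. \<forall>B\<in>Ob C. \<exists>X i1 i2 p1 p2. biprod C X A B i1 i2 p1 p2)"

text \<open>k-linear automorphism (SO on objects, SM on arrows) playing the role of \<Sigma>^d.\<close>
definition lin_auto :: "('o,'m,'k::field) kcat \<Rightarrow> ('o \<Rightarrow> 'o) \<Rightarrow> ('m \<Rightarrow> 'm) \<Rightarrow> bool" where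
  "lin_auto C SO SM \<longleftrightarrow>
     bij_betw SO (Ob C) (Ob C) \<and> bij_betw SM (Ar C) (Ar C) \<and>
     (\<forall>f\<in>Ar C. src C (SM f) = SO (src C f) \<and> tgt C (SM f) = SO (tgt C f)) \<and>
     (\<forall>A\<in>Ob C. SM (ide C A) = ide C (SO A)) \<and>
     (\<forall>A B D f g. f \<in> Hom C A B \<longrightarrow> g \<in> Hom C B D \<longrightarrow> SM (cmp C g f) = cmp C (SM g) (SM f)) \<and>
     (\<forall>A B f g. f \<in> Hom C A B \<longrightarrow> g \<in> Hom C A B \<longrightarrow> SM (pls C f g) = pls C (SM f) (SM g)) \<and>
     (\<forall>A B f c. f \<in> Hom C A B \<longrightarrow> SM (scl C c f) = scl C c (SM f))"

text \<open>A sequence is a pair (A, \<alpha>) of functions on nat; only indices 0..d+1 matter.\<close>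

definition is_seq :: "('o,'m,'k) kcat \<Rightarrow> ('o \<Rightarrow> 'o) \<Rightarrow> nat \<Rightarrow> (nat \<Rightarrow> 'o) \<Rightarrow> (nat \<Rightarrow> 'm) \<Rightarrow> bool" where
  "is_seq C SO d A \<alpha> \<longleftrightarrow>
     (\<forall>i\<le>d+1. A i \<in> Ob C) \<and>
     (\<forall>i\<le>d. \<alpha> i \<in> Hom C (A i) (A (Suc i))) \<and>
     \<alpha> (d+1) \<in> Hom C (A (d+1)) (SO (A 0))"

definition seq_mor :: "('o,'m,'k) kcat \<Rightarrow> ('m \<Rightarrow> 'm) \<Rightarrow> nat \<Rightarrow>
    (nat \<Rightarrow> 'o) \<Rightarrow> (nat \<Rightarrow> 'm) \<Rightarrow> (nat \<Rightarrow> 'o) \<Rightarrow> (nat \<Rightarrow> 'm) \<Rightarrow> (nat \<Rightarrow> 'm) \<Rightarrow> bool" where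
  "seq_mor C SM d A \<alpha> B \<beta> \<phi> \<longleftrightarrow>
     (\<forall>i\<le>d+1. \<phi> i \<in> Hom C (A i) (B i)) \<and>
     (\<forall>i\<le>d. cmp C (\<beta> i) (\<phi> i) = cmp C (\<phi> (Suc i)) (\<alpha> i)) \<and>
     cmp C (\<beta> (d+1)) (\<phi> (d+1)) = cmp C (SM (\<phi> 0)) (\<alpha> (d+1))"

definition seq_iso :: "('o,'m,'k) kcat \<Rightarrow> ('m \<Rightarrow> 'm) \<Rightarrow> nat \<Rightarrow>
    (nat \<Rightarrow> 'o) \<Rightarrow> (nat \<Rightarrow> 'm) \<Rightarrow> (nat \<Rightarrow> 'o) \<Rightarrow> (nat \<Rightarrow> 'm) \<Rightarrow> (nat \<Rightarrow> 'm) \<Rightarrow> bool" where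
  "seq_iso C SM d A \<alpha> B \<beta> \<phi> \<longleftrightarrow> seq_mor C SM d A \<alpha> B \<beta> \<phi> \<and> (\<forall>i\<le>d+1. iso_arr C (\<phi> i))"

definition seq_dsum :: "('o,'m,'k) kcat \<Rightarrow> ('m \<Rightarrow> 'm) \<Rightarrow> nat \<Rightarrow>
    (nat \<Rightarrow> 'o) \<Rightarrow> (nat \<Rightarrow> 'm) \<Rightarrow> (nat \<Rightarrow> 'o) \<Rightarrow> (nat \<Rightarrow> 'm) \<Rightarrow> (nat \<Rightarrow> 'o) \<Rightarrow> (nat \<Rightarrow> 'm) \<Rightarrow> bool" where
  "seq_dsum C SM d A \<alpha> B \<beta> D \<gamma> \<longleftrightarrow>
     (\<exists>i1 i2 p1 p2 :: nat \<Rightarrow> 'm.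
        (\<forall>j\<le>d+1. biprod C (D j) (A j) (B j) (i1 j) (i2 j) (p1 j) (p2 j)) \<and>
        (\<forall>j\<le>d. \<gamma> j = pls C (cmp C (i1 (Suc j)) (cmp C (\<alpha> j) (p1 j)))
                            (cmp C (i2 (Suc j)) (cmp C (\<beta> j) (p2 j)))) \<and>
        \<gamma> (d+1) = pls C (cmp C (SM (i1 0)) (cmp C (\<alpha> (d+1)) (p1 (d+1))))
                         (cmp C (SM (i2 0)) (cmp C (\<beta> (d+1)) (p2 (d+1)))))"

definition rot_obj :: "('o \<Rightarrow> 'o) \<Rightarrow> nat \<Rightarrow> (nat \<Rightarrow> 'o) \<Rightarrow> nat \<Rightarrow> 'o" where
  "rot_obj SO d A = (\<lambda>i. if i = d+1 then SO (A 0) else A (Suc i))"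

definition rot_arr :: "('o,'m,'k::field) kcat \<Rightarrow> ('m \<Rightarrow> 'm) \<Rightarrow> nat \<Rightarrow> (nat \<Rightarrow> 'm) \<Rightarrow> nat \<Rightarrow> 'm" where
  "rot_arr C SM d \<alpha> = (\<lambda>i. if i = d+1 then scl C ((-1)^d) (SM (\<alpha> 0)) else \<alpha> (Suc i))"

text \<open>Mapping cone of \<phi> : (A,\<alpha>) \<rightarrow> (B,\<beta>):
  A_1\<oplus>B_0 \<rightarrow> A_2\<oplus>B_1 \<rightarrow> ... \<rightarrow> \<Sigma>A_0\<oplus>B_{d+1} \<rightarrow> \<Sigma>A_1\<oplus>\<Sigma>B_0
  with matrices [[-\<alpha>_{j+1}, 0], [\<phi>_{j+1}, \<beta>_j]] (where \<alpha>_{d+2} = \<Sigma>\<alpha>_0, \<phi>_{d+2} = \<Sigma>\<phi>_0).\<close>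
definition cone :: "('o,'m,'k::field) kcat \<Rightarrow> ('o \<Rightarrow> 'o) \<Rightarrow> ('m \<Rightarrow> 'm) \<Rightarrow> nat \<Rightarrow>
    (nat \<Rightarrow> 'o) \<Rightarrow> (nat \<Rightarrow> 'm) \<Rightarrow> (nat \<Rightarrow> 'o) \<Rightarrow> (nat \<Rightarrow> 'm) \<Rightarrow> (nat \<Rightarrow> 'm) \<Rightarrow>
    (nat \<Rightarrow> 'o) \<Rightarrow> (nat \<Rightarrow> 'm) \<Rightarrow> bool" where
  "cone C SO SM d A \<alpha> B \<beta> \<phi> D \<gamma> \<longleftrightarrow>
     (let A' = (\<lambda>k. if k \<le> d+1 then A k else SO (A 0));
          \<alpha>' = (\<lambda>k. if k \<le> d+1 then \<alpha> k else SM (\<alpha> 0));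
          \<phi>' = (\<lambda>k. if k \<le> d+1 then \<phi> k else SM (\<phi> 0))
      in \<exists>i1 i2 p1 p2 :: nat \<Rightarrow> 'm.
        (\<forall>j\<le>d+1. biprod C (D j) (A' (Suc j)) (B j) (i1 j) (i2 j) (p1 j) (p2 j)) \<and>
        (\<forall>j\<le>d+1.
           (let J1 = (if j = d+1 then SM (i1 0) else i1 (Suc j));
                J2 = (if j = d+1 then SM (i2 0) else i2 (Suc j))
            in \<gamma> j = pls C (pls C (cmp C J1 (cmp C (neg C (\<alpha>' (Suc j))) (p1 j)))
                                  (cmp C J2 (cmp C (\<phi>' (Suc j)) (p1 j))))
                           (cmp C J2 (cmp C (\<beta> j) (p2 j))))))"

section \<open>(d+2)-angulated categories (Geiss--Keller--Oppermann)\<close>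

definition angulated :: "('o,'m,'k::field) kcat \<Rightarrow> ('o \<Rightarrow> 'o) \<Rightarrow> ('m \<Rightarrow> 'm) \<Rightarrow>
    ((nat \<Rightarrow> 'o) \<times> (nat \<Rightarrow> 'm)) set \<Rightarrow> nat \<Rightarrow> bool" where
  "angulated C SO SM \<Theta> d \<longleftrightarrow>
     additive_klinear C \<and> lin_auto C SO SM \<and>
     (\<forall>(A,\<alpha>)\<in>\<Theta>. is_seq C SO d A \<alpha>) \<and>
     \<comment> \<open>(N1a) closed under isomorphisms, direct sums and direct summands\<close>
     (\<forall>A \<alpha> B \<beta> \<phi>. (A,\<alpha>) \<in> \<Theta> \<longrightarrow> is_seq C SO d B \<beta> \<longrightarrow> seq_iso C SM d A \<alpha> B \<beta> \<phi> \<longrightarrow>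
        (B,\<beta>) \<in> \<Theta>) \<and>
     (\<forall>A \<alpha> B \<beta> D \<gamma>. (A,\<alpha>) \<in> \<Theta> \<longrightarrow> (B,\<beta>) \<in> \<Theta> \<longrightarrow> seq_dsum C SM d A \<alpha> B \<beta> D \<gamma> \<longrightarrow>
        (D,\<gamma>) \<in> \<Theta>) \<and>
     (\<forall>A \<alpha> B \<beta> D \<gamma>. is_seq C SO d A \<alpha> \<longrightarrow> is_seq C SO d B \<beta> \<longrightarrow>
        seq_dsum C SM d A \<alpha> B \<beta> D \<gamma> \<longrightarrow> (D,\<gamma>) \<in> \<Theta> \<longrightarrow>
        (A,\<alpha>) \<in> \<Theta> \<and> (B,\<beta>) \<in> \<Theta>) \<and>
     \<comment> \<open>(N1b) trivial sequences A \<rightarrow> A \<rightarrow> 0 \<rightarrow> ... \<rightarrow> 0 \<rightarrow> \<Sigma>^d A\<close>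
     (\<forall>A\<in>Ob C. \<forall>Z. zero_obj C Z \<longrightarrow>
        ((\<lambda>i. if i \<le> 1 then A else Z),
         (\<lambda>i. if i = 0 then ide C A else if i = 1 then zro C A Z
              else if i \<le> d then zro C Z Z else zro C Z (SO A))) \<in> \<Theta>) \<and>
     \<comment> \<open>(N1c) every morphism extends to a (d+2)-angle\<close>
     (\<forall>A0 A1 f. A0 \<in> Ob C \<longrightarrow> A1 \<in> Ob C \<longrightarrow> f \<in> Hom C A0 A1 \<longrightarrow>
        (\<exists>A \<alpha>. (A,\<alpha>) \<in> \<Theta> \<and> A 0 = A0 \<and> A 1 = A1 \<and> \<alpha> 0 = f)) \<and>
     \<comment> \<open>(N2) rotation\<close>
     (\<forall>A \<alpha>. is_seq C SO d A \<alpha> \<longrightarrow>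
        ((A,\<alpha>) \<in> \<Theta> \<longleftrightarrow> (rot_obj SO d A, rot_arr C SM d \<alpha>) \<in> \<Theta>)) \<and>
     \<comment> \<open>(N3) commutative squares extend to morphisms of (d+2)-angles\<close>
     (\<forall>A \<alpha> B \<beta> f0 f1. (A,\<alpha>) \<in> \<Theta> \<longrightarrow> (B,\<beta>) \<in> \<Theta> \<longrightarrow>
        f0 \<in> Hom C (A 0) (B 0) \<longrightarrow> f1 \<in> Hom C (A 1) (B 1) \<longrightarrow>
        cmp C (\<beta> 0) f0 = cmp C f1 (\<alpha> 0) \<longrightarrow>
        (\<exists>\<phi>. seq_mor C SM d A \<alpha> B \<beta> \<phi> \<and> \<phi> 0 = f0 \<and> \<phi> 1 = f1)) \<and>
     \<comment> \<open>(N4) ... and can be chosen with mapping cone a (d+2)-angle\<close>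
     (\<forall>A \<alpha> B \<beta> f0 f1. (A,\<alpha>) \<in> \<Theta> \<longrightarrow> (B,\<beta>) \<in> \<Theta> \<longrightarrow>
        f0 \<in> Hom C (A 0) (B 0) \<longrightarrow> f1 \<in> Hom C (A 1) (B 1) \<longrightarrow>
        cmp C (\<beta> 0) f0 = cmp C f1 (\<alpha> 0) \<longrightarrow>
        (\<exists>\<phi>. seq_mor C SM d A \<alpha> B \<beta> \<phi> \<and> \<phi> 0 = f0 \<and> \<phi> 1 = f1 \<and>
           (\<exists>D \<gamma>. cone C SO SM d A \<alpha> B \<beta> \<phi> D \<gamma> \<and> (D,\<gamma>) \<in> \<Theta>)))"

inductive_set hom_span :: "('o,'m,'k) kcat \<Rightarrow> 'o \<Rightarrow> 'o \<Rightarrow> 'm set \<Rightarrow> 'm set"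
  for C A B F where
  span_zero: "zro C A B \<in> hom_span C A B F"
| span_gen: "g \<in> F \<Longrightarrow> g \<in> hom_span C A B F"
| span_add: "f \<in> hom_span C A B F \<Longrightarrow> g \<in> hom_span C A B F \<Longrightarrow> pls C f g \<in> hom_span C A B F"
| span_scl: "f \<in> hom_span C A B F \<Longrightarrow> scl C c f \<in> hom_span C A B F"

definition hom_finite :: "('o,'m,'k) kcat \<Rightarrow> bool" where
  "hom_finite C \<longleftrightarrow> (\<forall>A\<in>Ob C. \<forall>B\<in>Ob C. \<exists>F. finite F \<and> F \<subseteq> Hom C A B \<and>
      Hom C A B \<subseteq> hom_span C A B F)"

definition local_obj :: "('o,'m,'k::field) kcat \<Rightarrow> 'o \<Rightarrow> bool" where
  "local_obj C A \<longleftrightarrow> A \<in> Ob C \<and> ide C A \<noteq> zro C A A \<and>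
     (\<forall>f\<in>Hom C A A. iso_arr C f \<or> iso_arr C (pls C (ide C A) (neg C f)))"

fun is_dsum :: "('o,'m,'k) kcat \<Rightarrow> 'o \<Rightarrow> 'o list \<Rightarrow> bool" where
  "is_dsum C X [] = zero_obj C X"
| "is_dsum C X (A # As) = (\<exists>Y i1 i2 p1 p2. biprod C X A Y i1 i2 p1 p2 \<and> is_dsum C Y As)"

definition krull_schmidt :: "('o,'m,'k::field) kcat \<Rightarrow> bool" where
  "krull_schmidt C \<longleftrightarrow> (\<forall>X\<in>Ob C. \<exists>As. (\<forall>A\<in>set As. local_obj C A) \<and> is_dsum C X As)"

definition indec :: "('o,'m,'k) kcat \<Rightarrow> 'o \<Rightarrow> bool" where
  "indec C X \<longleftrightarrow> X \<in> Ob C \<and> \<not> zero_obj C X \<and>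
     (\<forall>A B i1 i2 p1 p2. biprod C X A B i1 i2 p1 p2 \<longrightarrow> zero_obj C A \<or> zero_obj C B)"

definition rad :: "('o,'m,'k::field) kcat \<Rightarrow> 'o \<Rightarrow> 'o \<Rightarrow> 'm set" where
  "rad C A B = {f \<in> Hom C A B. \<forall>g\<in>Hom C B A. iso_arr C (pls C (ide C A) (neg C (cmp C g f)))}"

definition S_set :: "('o,'m,'k::field) kcat \<Rightarrow> ('o \<Rightarrow> 'o) \<Rightarrow>
    ((nat \<Rightarrow> 'o) \<times> (nat \<Rightarrow> 'm)) set \<Rightarrow> nat \<Rightarrow> 'o \<Rightarrow> ((nat \<Rightarrow> 'o) \<times> (nat \<Rightarrow> 'm)) set" where
  "S_set C SO \<Theta> d X = {(A,\<alpha>) \<in> \<Theta>. A (d+1) = X \<and> indec C (A 0) \<and>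
      \<alpha> (d+1) \<noteq> zro C (A (d+1)) (SO (A 0)) \<and>
      (d \<ge> 2 \<longrightarrow> (\<forall>i. 1 \<le> i \<and> i \<le> d - 1 \<longrightarrow> \<alpha> i \<in> rad C (A i) (A (Suc i))))}"

definition T_set :: "('o,'m,'k::field) kcat \<Rightarrow> ('o \<Rightarrow> 'o) \<Rightarrow>
    ((nat \<Rightarrow> 'o) \<times> (nat \<Rightarrow> 'm)) set \<Rightarrow> nat \<Rightarrow> 'o \<Rightarrow> ((nat \<Rightarrow> 'o) \<times> (nat \<Rightarrow> 'm)) set" where
  "T_set C SO \<Theta> d X = {(A,\<alpha>) \<in> \<Theta>. A 0 = X \<and> indec C (A (d+1)) \<and>
      \<alpha> (d+1) \<noteq> zro C (A (d+1)) (SO (A 0)) \<and>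
      (d \<ge> 2 \<longrightarrow> (\<forall>i. 1 \<le> i \<and> i \<le> d - 1 \<longrightarrow> \<alpha> i \<in> rad C (A i) (A (Suc i))))}"

end

theory Submission
  imports Defs
begin
lemma kq0: "klinear C \<Longrightarrow> (\<forall>A\<in>Ob C. \<forall>B\<in>Ob C. zro C A B \<in> Hom C A B)"
  unfolding klinear_def by (elim conjE) assumption
lemma kq1: "klinear C \<Longrightarrow> (\<forall>A B f g. f \<in> Hom C A B \<longrightarrow> g \<in> Hom C A B \<longrightarrow> pls C f g \<in> Hom C A B)"
  unfolding klinear_def by (elim conjE) assumption
lemma kq2: "klinear C \<Longrightarrow> (\<forall>A B f c. f \<in> Hom C A B \<longrightarrow> scl C c f \<in> Hom C A B)"
  unfolding klinear_def by (elim conjE) assumption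
lemma kq3: "klinear C \<Longrightarrow> (\<forall>A B f g h. f \<in> Hom C A B \<longrightarrow> g \<in> Hom C A B \<longrightarrow> h \<in> Hom C A B \<longrightarrow>
        pls C (pls C f g) h = pls C f (pls C g h))"
  unfolding klinear_def by (elim conjE) assumption
lemma kq4: "klinear C \<Longrightarrow> (\<forall>A B f g. f \<in> Hom C A B \<longrightarrow> g \<in> Hom C A B \<longrightarrow> pls C f g = pls C g f)"
  unfolding klinear_def by (elim conjE) assumption
lemma kq5: "klinear C \<Longrightarrow> (\<forall>A B f. f \<in> Hom C A B \<longrightarrow> pls C f (zro C A B) = f)"
  unfolding klinear_def by (elim conjE) assumption
lemma kq6: "klinear C \<Longrightarrow> (\<forall>A B f. f \<in> Hom C A B \<longrightarrow> pls C f (neg C f) = zro C A B)"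
  unfolding klinear_def by (elim conjE) assumption
lemma kq7: "klinear C \<Longrightarrow> (\<forall>A B f g a. f \<in> Hom C A B \<longrightarrow> g \<in> Hom C A B \<longrightarrow>
        scl C a (pls C f g) = pls C (scl C a f) (scl C a g))"
  unfolding klinear_def by (elim conjE) assumption
lemma kq8: "klinear C \<Longrightarrow> (\<forall>A B f a b. f \<in> Hom C A B \<longrightarrow> scl C (a + b) f = pls C (scl C a f) (scl C b f))"
  unfolding klinear_def by (elim conjE) assumption
lemma kq9: "klinear C \<Longrightarrow> (\<forall>A B f a b. f \<in> Hom C A B \<longrightarrow> scl C (a * b) f = scl C a (scl C b f))"
  unfolding klinear_def by (elim conjE) assumption
lemma kq10: "klinear C \<Longrightarrow> (\<forall>A B f. f \<in> Hom C A B \<longrightarrow> scl C 1 f = f)"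
  unfolding klinear_def by (elim conjE) assumption
lemma kq11: "klinear C \<Longrightarrow> (\<forall>A B D f f' g. f \<in> Hom C A B \<longrightarrow> f' \<in> Hom C A B \<longrightarrow> g \<in> Hom C B D \<longrightarrow>
        cmp C g (pls C f f') = pls C (cmp C g f) (cmp C g f'))"
  unfolding klinear_def by (elim conjE) assumption
lemma kq12: "klinear C \<Longrightarrow> (\<forall>A B D f g g'. f \<in> Hom C A B \<longrightarrow> g \<in> Hom C B D \<longrightarrow> g' \<in> Hom C B D \<longrightarrow>
        cmp C (pls C g g') f = pls C (cmp C g f) (cmp C g' f))"
  unfolding klinear_def by (elim conjE) assumption
lemma kq13: "klinear C \<Longrightarrow> (\<forall>A B D f g a. f \<in> Hom C A B \<longrightarrow> g \<in> Hom C B D \<longrightarrow>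
        cmp C (scl C a g) f = scl C a (cmp C g f) \<and> cmp C g (scl C a f) = scl C a (cmp C g f))"
  unfolding klinear_def by (elim conjE) assumption
lemma cq0: "klinear C \<Longrightarrow> (\<forall>f\<in>Ar C. src C f \<in> Ob C \<and> tgt C f \<in> Ob C)"
  unfolding klinear_def category_def by (elim conjE) assumption
lemma cq1: "klinear C \<Longrightarrow> (\<forall>A\<in>Ob C. ide C A \<in> Hom C A A)"
  unfolding klinear_def category_def by (elim conjE) assumption
lemma cq2: "klinear C \<Longrightarrow> (\<forall>A B D f g. f \<in> Hom C A B \<longrightarrow> g \<in> Hom C B D \<longrightarrow> cmp C g f \<in> Hom C A D)"
  unfolding klinear_def category_def by (elim conjE) assumption
lemma cq3: "klinear C \<Longrightarrow> (\<forall>A B D E f g h. f \<in> Hom C A B \<longrightarrow> g \<in> Hom C B D \<longrightarrow> h \<in> Hom C D E \<longrightarrow>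
        cmp C h (cmp C g f) = cmp C (cmp C h g) f)"
  unfolding klinear_def category_def by (elim conjE) assumption
lemma cq4: "klinear C \<Longrightarrow> (\<forall>A B f. f \<in> Hom C A B \<longrightarrow> cmp C f (ide C A) = f \<and> cmp C (ide C B) f = f)"
  unfolding klinear_def category_def by (elim conjE) assumption

lemma lq0: "lin_auto C SO SM \<Longrightarrow> bij_betw SO (Ob C) (Ob C) \<and> bij_betw SM (Ar C) (Ar C)"
  unfolding lin_auto_def by (elim conjE) (intro conjI; assumption)
lemma lq1: "lin_auto C SO SM \<Longrightarrow> (\<forall>f\<in>Ar C. src C (SM f) = SO (src C f) \<and> tgt C (SM f) = SO (tgt C f))"
  unfolding lin_auto_def by (elim conjE) assumption
lemma lq2: "lin_auto C SO SM \<Longrightarrow> (\<forall>A\<in>Ob C. SM (ide C A) = ide C (SO A))"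
  unfolding lin_auto_def by (elim conjE) assumption
lemma lq3: "lin_auto C SO SM \<Longrightarrow> (\<forall>A B D f g. f \<in> Hom C A B \<longrightarrow> g \<in> Hom C B D \<longrightarrow> SM (cmp C g f) = cmp C (SM g) (SM f))"
  unfolding lin_auto_def by (elim conjE) assumption
lemma lq4: "lin_auto C SO SM \<Longrightarrow> (\<forall>A B f g. f \<in> Hom C A B \<longrightarrow> g \<in> Hom C A B \<longrightarrow> SM (pls C f g) = pls C (SM f) (SM g))"
  unfolding lin_auto_def by (elim conjE) assumption
lemma lq5: "lin_auto C SO SM \<Longrightarrow> (\<forall>A B f c. f \<in> Hom C A B \<longrightarrow> SM (scl C c f) = scl C c (SM f))"
  unfolding lin_auto_def by (elim conjE) assumption

context fixes C :: "('o,'m,'k::field) kcat" assumes kl: "klinear C" begin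
lemma zroH: "A \<in> Ob C \<Longrightarrow> B \<in> Ob C \<Longrightarrow> zro C A B \<in> Hom C A B" using kq0[OF kl] by blast
lemma plsH: "f \<in> Hom C A B \<Longrightarrow> g \<in> Hom C A B \<Longrightarrow> pls C f g \<in> Hom C A B" using kq1[OF kl] by blast
lemma sclH: "f \<in> Hom C A B \<Longrightarrow> scl C c f \<in> Hom C A B" using kq2[OF kl] by blast
lemma negH: "f \<in> Hom C A B \<Longrightarrow> neg C f \<in> Hom C A B" unfolding neg_def by (rule sclH)
lemma passoc: "f \<in> Hom C A B \<Longrightarrow> g \<in> Hom C A B \<Longrightarrow> h \<in> Hom C A B \<Longrightarrow> pls C (pls C f g) h = pls C f (pls C g h)" using kq3[OF kl] by blast
lemma pzr: "f \<in> Hom C A B \<Longrightarrow> pls C f (zro C A B) = f" using kq5[OF kl] by blast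
lemma pneg: "f \<in> Hom C A B \<Longrightarrow> pls C f (neg C f) = zro C A B" using kq6[OF kl] by blast
lemma sdist: "f \<in> Hom C A B \<Longrightarrow> g \<in> Hom C A B \<Longrightarrow> scl C a (pls C f g) = pls C (scl C a f) (scl C a g)" using kq7[OF kl] by blast
lemma smul: "f \<in> Hom C A B \<Longrightarrow> scl C (a * b) f = scl C a (scl C b f)" using kq9[OF kl] by blast
lemma sone: "f \<in> Hom C A B \<Longrightarrow> scl C 1 f = f" using kq10[OF kl] by blast
lemma cdl: "f \<in> Hom C A B \<Longrightarrow> f' \<in> Hom C A B \<Longrightarrow> g \<in> Hom C B D \<Longrightarrow> cmp C g (pls C f f') = pls C (cmp C g f) (cmp C g f')" using kq11[OF kl] by blast
lemma cdr: "f \<in> Hom C A B \<Longrightarrow> g \<in> Hom C B D \<Longrightarrow> g' \<in> Hom C B D \<Longrightarrow> cmp C (pls C g g') f = pls C (cmp C g f) (cmp C g' f)" using kq12[OF kl] by blast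
lemma obs: "f \<in> Ar C \<Longrightarrow> src C f \<in> Ob C \<and> tgt C f \<in> Ob C" using cq0[OF kl] by blast
lemma ideH: "A \<in> Ob C \<Longrightarrow> ide C A \<in> Hom C A A" using cq1[OF kl] by blast
lemma cmpH: "f \<in> Hom C A B \<Longrightarrow> g \<in> Hom C B D \<Longrightarrow> cmp C g f \<in> Hom C A D" using cq2[OF kl] by blast
lemma idr: "f \<in> Hom C A B \<Longrightarrow> cmp C f (ide C A) = f" using cq4[OF kl] by blast
lemma idl: "f \<in> Hom C A B \<Longrightarrow> cmp C (ide C B) f = f" using cq4[OF kl] by blast

lemma zero_cancel:
  assumes f: "f \<in> Hom C A B" and ff: "pls C f f = f"
  shows "f = zro C A B"
proof -
  have n: "neg C f \<in> Hom C A B" using f by (rule negH)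
  have "zro C A B = pls C f (neg C f)" using pneg[OF f] by simp
  also have "\<dots> = pls C (pls C f f) (neg C f)" using ff by simp
  also have "\<dots> = pls C f (pls C f (neg C f))" using passoc[OF f f n] .
  also have "\<dots> = pls C f (zro C A B)" using pneg[OF f] by simp
  also have "\<dots> = f" using pzr[OF f] .
  finally show ?thesis by simp
qed

lemma zro_double: "A \<in> Ob C \<Longrightarrow> B \<in> Ob C \<Longrightarrow> pls C (zro C A B) (zro C A B) = zro C A B"
  using pzr zroH by blast

lemma zero_obj_iff: "zero_obj C Y \<longleftrightarrow> Y \<in> Ob C \<and> ide C Y = zro C Y Y"
proof
  assume z: "zero_obj C Y"
  then have Y: "Y \<in> Ob C" by (simp add: zero_obj_def)
  have "ide C Y \<in> Hom C Y Y" using Y by (rule ideH)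
  moreover have "zro C Y Y \<in> Hom C Y Y" using Y by (simp add: zroH)
  ultimately show "Y \<in> Ob C \<and> ide C Y = zro C Y Y" using z Y unfolding zero_obj_def by blast
next
  assume a: "Y \<in> Ob C \<and> ide C Y = zro C Y Y"
  hence Y: "Y \<in> Ob C" and e: "ide C Y = zro C Y Y" by auto
  let ?z = "zro C Y Y"
  have zh: "?z \<in> Hom C Y Y" using Y by (simp add: zroH)
  have zz: "pls C ?z ?z = ?z" using Y by (simp add: zro_double)
  have L: "f = zro C Y B" if f: "f \<in> Hom C Y B" for f B
  proof -
    have c: "cmp C f ?z \<in> Hom C Y B" using cmpH[OF zh f] .
    have "pls C (cmp C f ?z) (cmp C f ?z) = cmp C f (pls C ?z ?z)"
      using cdl[OF zh zh f] by simp
    also have "\<dots> = cmp C f ?z" using zz by simp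
    finally have "cmp C f ?z = zro C Y B" using zero_cancel[OF c] by simp
    moreover have "cmp C f (ide C Y) = f" using idr[OF f] .
    ultimately show ?thesis using e by simp
  qed
  have R: "f = zro C B Y" if f: "f \<in> Hom C B Y" for f B
  proof -
    have c: "cmp C ?z f \<in> Hom C B Y" using cmpH[OF f zh] .
    have "pls C (cmp C ?z f) (cmp C ?z f) = cmp C (pls C ?z ?z) f"
      using cdr[OF f zh zh] by simp
    also have "\<dots> = cmp C ?z f" using zz by simp
    finally have "cmp C ?z f = zro C B Y" using zero_cancel[OF c] by simp
    moreover have "cmp C (ide C Y) f = f" using idl[OF f] .
    ultimately show ?thesis using e by simp
  qed
  show "zero_obj C Y" unfolding zero_obj_def
  proof (intro conjI ballI)
    show "Y \<in> Ob C" by fact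
  next
    fix A assume A: "A \<in> Ob C"
    show "\<exists>!f. f \<in> Hom C Y A" using L zroH[OF Y A] by blast
  next
    fix A assume A: "A \<in> Ob C"
    show "\<exists>!f. f \<in> Hom C A Y" using R zroH[OF A Y] by blast
  qed
qed

lemma scl_ide_nz:
  assumes Y: "Y \<in> Ob C" and nz: "\<not> zero_obj C Y" and c: "c * c = (1::'k)"
  shows "scl C c (ide C Y) \<noteq> zro C Y Y"
proof
  assume h: "scl C c (ide C Y) = zro C Y Y"
  let ?z = "zro C Y Y"
  have zh: "?z \<in> Hom C Y Y" using Y by (simp add: zroH)
  have s: "scl C c ?z \<in> Hom C Y Y" using sclH[OF zh] .
  have "pls C (scl C c ?z) (scl C c ?z) = scl C c (pls C ?z ?z)" using sdist[OF zh zh] by simp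
  also have "\<dots> = scl C c ?z" using zro_double[OF Y Y] by simp
  finally have sz: "scl C c ?z = ?z" using zero_cancel[OF s] by simp
  have i: "ide C Y \<in> Hom C Y Y" using ideH[OF Y] .
  have "ide C Y = scl C 1 (ide C Y)" using sone[OF i] by simp
  also have "\<dots> = scl C c (scl C c (ide C Y))" using smul[OF i] c by metis
  also have "\<dots> = ?z" using h sz by simp
  finally show False using nz Y zero_obj_iff by blast
qed

lemma rad_zero: assumes z: "zero_obj C Z" shows "zro C Z Z \<in> rad C Z Z"
proof -
  have Z: "Z \<in> Ob C" using z by (simp add: zero_obj_def)
  have e: "ide C Z = zro C Z Z" using z zero_obj_iff by blast
  have u: "\<And>f. f \<in> Hom C Z Z \<Longrightarrow> f = ide C Z" using z Z ideH[OF Z] unfolding zero_obj_def by blast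
  have zh: "zro C Z Z \<in> Hom C Z Z" using zroH[OF Z Z] .
  have iso: "iso_arr C (ide C Z)" unfolding iso_arr_def
    using ideH[OF Z] idr[OF ideH[OF Z]] by (auto simp: Hom_def)
  show ?thesis unfolding rad_def
  proof (intro CollectI conjI ballI zh)
    fix g assume g: "g \<in> Hom C Z Z"
    have "pls C (ide C Z) (neg C (cmp C g (zro C Z Z))) \<in> Hom C Z Z"
      using plsH[OF ideH[OF Z] negH[OF cmpH[OF zh g]]] .
    thus "iso_arr C (pls C (ide C Z) (neg C (cmp C g (zro C Z Z))))" using u iso by metis
  qed
qed

context fixes SO SM assumes la: "lin_auto C SO SM" begin

lemma SO_Ob: "X \<in> Ob C \<Longrightarrow> SO X \<in> Ob C" using lq0[OF la] unfolding bij_betw_def by auto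
lemma SM_Ar: "f \<in> Ar C \<Longrightarrow> SM f \<in> Ar C" using lq0[OF la] unfolding bij_betw_def by auto
lemma SO_inj: "inj_on SO (Ob C)" using lq0[OF la] unfolding bij_betw_def by auto
lemma SM_inj: "inj_on SM (Ar C)" using lq0[OF la] unfolding bij_betw_def by auto
lemma SO_surj: "Y \<in> Ob C \<Longrightarrow> \<exists>X\<in>Ob C. SO X = Y" using lq0[OF la] unfolding bij_betw_def by (metis imageE)
lemma SM_surj: "g \<in> Ar C \<Longrightarrow> \<exists>f\<in>Ar C. SM f = g" using lq0[OF la] unfolding bij_betw_def by (metis imageE)
lemma SM_ide: "A \<in> Ob C \<Longrightarrow> SM (ide C A) = ide C (SO A)" using lq2[OF la] by blast
lemma SM_cmp: "f \<in> Hom C A B \<Longrightarrow> g \<in> Hom C B D \<Longrightarrow> SM (cmp C g f) = cmp C (SM g) (SM f)" using lq3[OF la] by blast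
lemma SM_pls: "f \<in> Hom C A B \<Longrightarrow> g \<in> Hom C A B \<Longrightarrow> SM (pls C f g) = pls C (SM f) (SM g)" using lq4[OF la] by blast

lemma SM_hom: "f \<in> Hom C A B \<Longrightarrow> SM f \<in> Hom C (SO A) (SO B)"
  using lq1[OF la] SM_Ar unfolding Hom_def by auto

lemma SM_hom_rev:
  assumes f: "f \<in> Ar C" and A: "A \<in> Ob C" and B: "B \<in> Ob C" and h: "SM f \<in> Hom C (SO A) (SO B)"
  shows "f \<in> Hom C A B"
proof -
  have "SO (src C f) = SO A" "SO (tgt C f) = SO B" using h lq1[OF la] f unfolding Hom_def by auto
  moreover have "src C f \<in> Ob C" "tgt C f \<in> Ob C" using obs[OF f] by auto
  ultimately have "src C f = A" "tgt C f = B" using SO_inj A B unfolding inj_on_def by auto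
  thus ?thesis using f unfolding Hom_def by auto
qed

lemma SM_zro: assumes A: "A \<in> Ob C" and B: "B \<in> Ob C"
  shows "SM (zro C A B) = zro C (SO A) (SO B)"
proof -
  have zh: "zro C A B \<in> Hom C A B" using zroH[OF A B] .
  have "pls C (SM (zro C A B)) (SM (zro C A B)) = SM (pls C (zro C A B) (zro C A B))"
    using SM_pls[OF zh zh] by simp
  also have "\<dots> = SM (zro C A B)" using zro_double[OF A B] by simp
  finally show ?thesis using zero_cancel[OF SM_hom[OF zh]] by simp
qed

lemma zero_obj_SO: assumes X: "X \<in> Ob C"
  shows "zero_obj C (SO X) \<longleftrightarrow> zero_obj C X"
proof -
  have i: "ide C X \<in> Ar C" using ideH[OF X] unfolding Hom_def by blast
  have z: "zro C X X \<in> Ar C" using zroH[OF X X] by (simp add: Hom_def)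
  have e1: "SM (ide C X) = ide C (SO X)" using SM_ide[OF X] .
  have e2: "SM (zro C X X) = zro C (SO X) (SO X)" using SM_zro[OF X X] .
  show ?thesis unfolding zero_obj_iff
    using SO_Ob[OF X] X e1 e2 inj_onD[OF SM_inj _ i z] by metis
qed

lemma SM_eq: "f \<in> Hom C P Q \<Longrightarrow> g \<in> Hom C P' Q' \<Longrightarrow> SM f = SM g \<Longrightarrow> f = g"
  using SM_inj unfolding inj_on_def Hom_def by blast

lemma biprod_fwd: assumes b: "biprod C X A B i1 i2 p1 p2"
  shows "biprod C (SO X) (SO A) (SO B) (SM i1) (SM i2) (SM p1) (SM p2)"
proof -
  have X: "X \<in> Ob C" and A: "A \<in> Ob C" and B: "B \<in> Ob C"
    and h1: "i1 \<in> Hom C A X" and h2: "i2 \<in> Hom C B X" and h3: "p1 \<in> Hom C X A" and h4: "p2 \<in> Hom C X B"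
    and e1: "cmp C p1 i1 = ide C A" and e2: "cmp C p2 i2 = ide C B"
    and e3: "cmp C p2 i1 = zro C A B" and e4: "cmp C p1 i2 = zro C B A"
    and e5: "pls C (cmp C i1 p1) (cmp C i2 p2) = ide C X"
    using b unfolding biprod_def by auto
  show ?thesis unfolding biprod_def
    using SO_Ob[OF X] SO_Ob[OF A] SO_Ob[OF B] SM_hom[OF h1] SM_hom[OF h2] SM_hom[OF h3] SM_hom[OF h4]
      SM_cmp[OF h1 h3, symmetric] SM_cmp[OF h2 h4, symmetric] SM_cmp[OF h1 h4, symmetric] SM_cmp[OF h2 h3, symmetric]
      SM_cmp[OF h3 h1, symmetric] SM_cmp[OF h4 h2, symmetric]
      SM_pls[OF cmpH[OF h3 h1] cmpH[OF h4 h2], symmetric]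
      e1 e2 e3 e4 e5 SM_ide[OF X] SM_ide[OF A] SM_ide[OF B] SM_zro[OF A B] SM_zro[OF B A]
    by simp
qed

lemma biprod_bwd: assumes b: "biprod C (SO X) A' B' j1 j2 q1 q2" and X: "X \<in> Ob C"
  shows "\<exists>A B i1 i2 p1 p2. A \<in> Ob C \<and> B \<in> Ob C \<and> SO A = A' \<and> SO B = B' \<and> biprod C X A B i1 i2 p1 p2"
proof -
  have A': "A' \<in> Ob C" and B': "B' \<in> Ob C"
    and h1: "j1 \<in> Hom C A' (SO X)" and h2: "j2 \<in> Hom C B' (SO X)" and h3: "q1 \<in> Hom C (SO X) A'" and h4: "q2 \<in> Hom C (SO X) B'"
    and e1: "cmp C q1 j1 = ide C A'" and e2: "cmp C q2 j2 = ide C B'"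
    and e3: "cmp C q2 j1 = zro C A' B'" and e4: "cmp C q1 j2 = zro C B' A'"
    and e5: "pls C (cmp C j1 q1) (cmp C j2 q2) = ide C (SO X)"
    using b unfolding biprod_def by auto
  obtain A where A: "A \<in> Ob C" "SO A = A'" using SO_surj[OF A'] by blast
  obtain B where B: "B \<in> Ob C" "SO B = B'" using SO_surj[OF B'] by blast
  have ar: "\<And>f P Q. f \<in> Hom C P Q \<Longrightarrow> f \<in> Ar C" unfolding Hom_def by blast
  obtain i1 where i1: "i1 \<in> Ar C" "SM i1 = j1" using SM_surj[OF ar[OF h1]] by blast
  obtain i2 where i2: "i2 \<in> Ar C" "SM i2 = j2" using SM_surj[OF ar[OF h2]] by blast
  obtain p1 where p1: "p1 \<in> Ar C" "SM p1 = q1" using SM_surj[OF ar[OF h3]] by blast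
  obtain p2 where p2: "p2 \<in> Ar C" "SM p2 = q2" using SM_surj[OF ar[OF h4]] by blast
  have g1: "i1 \<in> Hom C A X" using SM_hom_rev[OF i1(1) A(1) X] h1 A i1 by simp
  have g2: "i2 \<in> Hom C B X" using SM_hom_rev[OF i2(1) B(1) X] h2 B i2 by simp
  have g3: "p1 \<in> Hom C X A" using SM_hom_rev[OF p1(1) X A(1)] h3 A p1 by simp
  have g4: "p2 \<in> Hom C X B" using SM_hom_rev[OF p2(1) X B(1)] h4 B p2 by simp
  have f1: "cmp C p1 i1 = ide C A"
    by (rule SM_eq[OF cmpH[OF g1 g3] ideH[OF A(1)]]) (simp add: SM_cmp[OF g1 g3] SM_ide[OF A(1)] i1 p1 A e1)
  have f2: "cmp C p2 i2 = ide C B"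
    by (rule SM_eq[OF cmpH[OF g2 g4] ideH[OF B(1)]]) (simp add: SM_cmp[OF g2 g4] SM_ide[OF B(1)] i2 p2 B e2)
  have f3: "cmp C p2 i1 = zro C A B"
    by (rule SM_eq[OF cmpH[OF g1 g4] zroH[OF A(1) B(1)]]) (simp add: SM_cmp[OF g1 g4] SM_zro[OF A(1) B(1)] i1 p2 A B e3)
  have f4: "cmp C p1 i2 = zro C B A"
    by (rule SM_eq[OF cmpH[OF g2 g3] zroH[OF B(1) A(1)]]) (simp add: SM_cmp[OF g2 g3] SM_zro[OF B(1) A(1)] i2 p1 A B e4)
  have f5: "pls C (cmp C i1 p1) (cmp C i2 p2) = ide C X"
    by (rule SM_eq[OF plsH[OF cmpH[OF g3 g1] cmpH[OF g4 g2]] ideH[OF X]])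
      (simp add: SM_pls[OF cmpH[OF g3 g1] cmpH[OF g4 g2]] SM_cmp[OF g3 g1] SM_cmp[OF g4 g2] SM_ide[OF X] i1 i2 p1 p2 e5)
  have "biprod C X A B i1 i2 p1 p2" unfolding biprod_def
    using X A B g1 g2 g3 g4 f1 f2 f3 f4 f5 by simp
  thus ?thesis using A B by blast
qed

lemma indec_SO: assumes X: "X \<in> Ob C" shows "indec C (SO X) \<longleftrightarrow> indec C X"
proof
  assume h: "indec C (SO X)"
  show "indec C X" unfolding indec_def
  proof (intro conjI allI impI)
    show "X \<in> Ob C" by fact
    show "\<not> zero_obj C X" using h zero_obj_SO[OF X] unfolding indec_def by blast
  next
    fix A B i1 i2 p1 p2 assume b: "biprod C X A B i1 i2 p1 p2"
    have A: "A \<in> Ob C" and B: "B \<in> Ob C" using b unfolding biprod_def by auto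
    have "zero_obj C (SO A) \<or> zero_obj C (SO B)" using h biprod_fwd[OF b] unfolding indec_def by blast
    thus "zero_obj C A \<or> zero_obj C B" using zero_obj_SO[OF A] zero_obj_SO[OF B] by blast
  qed
next
  assume h: "indec C X"
  show "indec C (SO X)" unfolding indec_def
  proof (intro conjI allI impI)
    show "SO X \<in> Ob C" using SO_Ob[OF X] .
    show "\<not> zero_obj C (SO X)" using h zero_obj_SO[OF X] unfolding indec_def by blast
  next
    fix A' B' i1 i2 p1 p2 assume b: "biprod C (SO X) A' B' i1 i2 p1 p2"
    obtain A B j1 j2 q1 q2 where A: "A \<in> Ob C" and B: "B \<in> Ob C" and e: "SO A = A'" "SO B = B'"
      and bb: "biprod C X A B j1 j2 q1 q2" using biprod_bwd[OF b X] by blast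
    have "zero_obj C A \<or> zero_obj C B" using h bb unfolding indec_def by blast
    thus "zero_obj C A' \<or> zero_obj C B'" using zero_obj_SO[OF A] zero_obj_SO[OF B] e by blast
  qed
qed

end
end

lemma ang_parts1: "angulated C SO SM \<Theta> d \<Longrightarrow> additive_klinear C"
  unfolding angulated_def by (elim conjE) assumption
lemma ang_parts2: "angulated C SO SM \<Theta> d \<Longrightarrow> lin_auto C SO SM"
  unfolding angulated_def by (elim conjE) assumption
lemma ang_parts3: "angulated C SO SM \<Theta> d \<Longrightarrow> \<forall>(A,\<alpha>)\<in>\<Theta>. is_seq C SO d A \<alpha>"
  unfolding angulated_def by (elim conjE) assumption
lemma ang_parts4: "angulated C SO SM \<Theta> d \<Longrightarrow> (\<forall>A\<in>Ob C. \<forall>Z. zero_obj C Z \<longrightarrow>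
        ((\<lambda>i. if i \<le> 1 then A else Z),
         (\<lambda>i. if i = 0 then ide C A else if i = 1 then zro C A Z
              else if i \<le> d then zro C Z Z else zro C Z (SO A))) \<in> \<Theta>)"
  unfolding angulated_def by (elim conjE) assumption
lemma ang_parts5: "angulated C SO SM \<Theta> d \<Longrightarrow> (\<forall>A \<alpha>. is_seq C SO d A \<alpha> \<longrightarrow>
        ((A,\<alpha>) \<in> \<Theta> \<longleftrightarrow> (rot_obj SO d A, rot_arr C SM d \<alpha>) \<in> \<Theta>))"
  unfolding angulated_def by (elim conjE) assumption
lemmas ang_parts = ang_parts1 ang_parts2 ang_parts3 ang_parts4 ang_parts5

lemma rot_triv:
  fixes C :: "('o,'m,'k::field) kcat"
  assumes d: "d \<ge> 1" and ang: "angulated C SO SM \<Theta> d" and A: "A \<in> Ob C" and Z: "zero_obj C Z" and nzA: "\<not> zero_obj C A"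
  defines "B \<equiv> rot_obj SO d (\<lambda>i. if i \<le> 1 then A else Z)"
    and "\<beta> \<equiv> rot_arr C SM d (\<lambda>i. if i = 0 then ide C A else if i = 1 then zro C A Z
              else if i \<le> d then zro C Z Z else zro C Z (SO A))"
  shows "(B, \<beta>) \<in> \<Theta> \<and> B 0 = A \<and> B (d+1) = SO A \<and>
         \<beta> (d+1) \<noteq> zro C (B (d+1)) (SO (B 0)) \<and>
         (\<forall>i. 1 \<le> i \<and> i \<le> d - 1 \<longrightarrow> \<beta> i \<in> rad C (B i) (B (Suc i)))"
proof -
  note P = ang_parts[OF ang]
  have kl: "klinear C" using P(1) unfolding additive_klinear_def by blast
  have la: "lin_auto C SO SM" using P(2) .
  let ?T = "((\<lambda>i::nat. if i \<le> 1 then A else Z),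
         (\<lambda>i. if i = 0 then ide C A else if i = 1 then zro C A Z
              else if i \<le> d then zro C Z Z else zro C Z (SO A)))"
  have T: "?T \<in> \<Theta>" using P(4) A Z by blast
  have sq: "is_seq C SO d (fst ?T) (snd ?T)" using bspec[OF P(3) T] by (simp only: case_prod_beta)
  have mem: "(B, \<beta>) \<in> \<Theta>" using P(5) sq T unfolding B_def \<beta>_def by (simp only: fst_conv snd_conv)
  have B0: "B 0 = A" using d unfolding B_def rot_obj_def by simp
  have Bd: "B (d+1) = SO A" unfolding B_def rot_obj_def by simp
  have bd: "\<beta> (d+1) = scl C ((-1)^d) (ide C (SO A))"
    unfolding \<beta>_def rot_arr_def using SM_ide[OF kl la A] by simp
  have SA: "SO A \<in> Ob C" using SO_Ob[OF kl la A] .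
  have Znz: "\<not> zero_obj C A \<Longrightarrow> \<not> zero_obj C (SO A)" using zero_obj_SO[OF kl la A] by blast
  have c: "((-1::'k)^d) * ((-1)^d) = 1" by (simp add: power_mult_distrib[symmetric])
  have R: "\<forall>i. 1 \<le> i \<and> i \<le> d - 1 \<longrightarrow> \<beta> i \<in> rad C (B i) (B (Suc i))"
  proof (intro allI impI)
    fix i assume i: "1 \<le> i \<and> i \<le> d - 1"
    have "B i = Z" "B (Suc i) = Z" "\<beta> i = zro C Z Z"
      using i d unfolding B_def \<beta>_def rot_obj_def rot_arr_def by auto
    thus "\<beta> i \<in> rad C (B i) (B (Suc i))" using rad_zero[OF kl Z] by simp
  qed
  show ?thesis
    using mem B0 Bd R bd scl_ide_nz[OF kl SA Znz[OF nzA] c] by simp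
qed

theorem lemma3p3:
  fixes C :: "('o,'m,'k::field) kcat"
    and SO :: "'o \<Rightarrow> 'o" and SM :: "'m \<Rightarrow> 'm"
    and \<Theta> :: "((nat \<Rightarrow> 'o) \<times> (nat \<Rightarrow> 'm)) set"
    and d :: nat and X :: 'o
  assumes "d \<ge> 1"
    and "angulated C SO SM \<Theta> d"
    and "hom_finite C"
    and "krull_schmidt C"
    and "indec C X"
  shows "S_set C SO \<Theta> d X \<noteq> {} \<and> T_set C SO \<Theta> d X \<noteq> {}"
proof -
  note P = ang_parts[OF assms(2)]
  have kl: "klinear C" using P(1) unfolding additive_klinear_def by blast
  have la: "lin_auto C SO SM" using P(2) .
  obtain Z where Z: "zero_obj C Z" using P(1) unfolding additive_klinear_def by blast
  have X: "X \<in> Ob C" and nzX: "\<not> zero_obj C X" using assms(5) unfolding indec_def by auto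
  obtain A where A: "A \<in> Ob C" "SO A = X" using SO_surj[OF kl la X] by blast
  have iA: "indec C A" using indec_SO[OF kl la A(1)] A assms(5) by simp
  have nzA: "\<not> zero_obj C A" using iA unfolding indec_def by blast
  have iSX: "indec C (SO X)" using indec_SO[OF kl la X] assms(5) by simp
  obtain B \<beta> where S: "(B, \<beta>) \<in> \<Theta> \<and> B 0 = A \<and> B (d+1) = SO A \<and>
         \<beta> (d+1) \<noteq> zro C (B (d+1)) (SO (B 0)) \<and>
         (\<forall>i. 1 \<le> i \<and> i \<le> d - 1 \<longrightarrow> \<beta> i \<in> rad C (B i) (B (Suc i)))"
    using rot_triv[OF assms(1,2) A(1) Z nzA] by blast
  obtain B' \<beta>' where T: "(B', \<beta>') \<in> \<Theta> \<and> B' 0 = X \<and> B' (d+1) = SO X \<and>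
         \<beta>' (d+1) \<noteq> zro C (B' (d+1)) (SO (B' 0)) \<and>
         (\<forall>i. 1 \<le> i \<and> i \<le> d - 1 \<longrightarrow> \<beta>' i \<in> rad C (B' i) (B' (Suc i)))"
    using rot_triv[OF assms(1,2) X Z nzX] by blast
  have "(B, \<beta>) \<in> S_set C SO \<Theta> d X" unfolding S_set_def using S A iA by (elim conjE) simp
  moreover have "(B', \<beta>') \<in> T_set C SO \<Theta> d X" unfolding T_set_def using T iSX by (elim conjE) simp
  ultimately show ?thesis by blast
qed

end
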